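(* Let $d\ge2$, $N\ge1$, $\boldsymbol{\alpha}=(\alpha_1,\dots,\alpha_d)$ with all $\alpha_i>0$, and $s$ an integer with $0\le s\le N$. Each of the Pólya level model, the Pólya down-up model and the Pólya up-down model with these parameters is a Markov chain on $\mathcal{X}_N^d$ that is reversible with respect to the Dirichlet-multinomial distribution $\mathcal{DM}(\cdot\mid N,\boldsymbol{\alpha})$.
   Context: $\mathcal{X}_N^d=\{\mathbf{x}\in\mathbb{N}_0^d:|\mathbf{x}|=N\}$, where $|\mathbf{x}|=\sum_i x_i$. Rising factorial: $a_{(k)}=a(a+1)\cdots(a+k-1)$, $a_{(0)}=1$. The Dirichlet-multinomial distribution is $\mathcal{DM}(\mathbf{x}\mid N,\boldsymbol{\alpha})=\frac{N!}{x_1!\cdots x_d!}\frac{\prod_{i=1}^d(\alpha_i)_{(x_i)}}{|\boldsymbol{\alpha}|_{(N)}}$ for $\mathbf{x}\in\mathcal{X}_N^d$, where $|\boldsymbol{\alpha}|=\sum_i\alpha_i$. Pólya urn models: an urn contains $d$ special balls, the $i$-th of color $i$ and weight $\alpha_i$, together with $N$ ordinary balls, each of unit weight and of one of the colors $1,\dots,d$. A Pólya draw consists of choosing a ball from the urn (special or ordinary) with probability proportional to its weight, and returning it together with one new ordinary ball (unit weight) of the same color. One step of the Pólya level model: mark $s$ of the $N$ ordinary balls uniformly at random (without replacement); perform $s$ successive Pólya draws (the marked balls stay in the urn during the draws); then remove the $s$ marked balls. One step of the Pólya down-up model: remove $s$ ordinary balls chosen uniformly at random among the $N$ ordinary balls,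 then perform $s$ successive Pólya draws. One step of the Pólya up-down model: perform $s$ successive Pólya draws, then remove $s$ ordinary balls chosen uniformly at random among the $N+s$ ordinary balls. In all three models the state $\mathbf{X}_t\in\mathcal{X}_N^d$ is the vector of color counts of the $N$ ordinary balls after $t$ steps. *)

theory Defs
  imports "HOL-Probability.Probability"
begin

text \<open>Colors are the elements of a finite type 'c (d = CARD('c)).
  A state is a vector of color counts 'c => nat.\<close>

definition XN :: "nat \<Rightarrow> ('c::finite \<Rightarrow> nat) set" where
  "XN N = {x. (\<Sum>i\<in>UNIV. x i) = N}"

definition DM :: "nat \<Rightarrow> ('c::finite \<Rightarrow> real) \<Rightarrow> ('c \<Rightarrow> nat) \<Rightarrow> real" where
  "DM N \<alpha> x = (if x \<in> XN N then
      fact N / (\<Prod>i\<in>UNIV. fact (x i))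
      * (\<Prod>i\<in>UNIV. pochhammer (\<alpha> i) (x i)) / pochhammer (\<Sum>i\<in>UNIV. \<alpha> i) N
    else 0)"

definition balls :: "('c \<Rightarrow> nat) \<Rightarrow> ('c \<times> nat) set" where
  "balls x = {(c, k). k < x c}"

definition counts_of :: "('c \<times> nat) set \<Rightarrow> 'c \<Rightarrow> nat" where
  "counts_of S c = card {k. (c, k) \<in> S}"

definition choose_balls :: "nat \<Rightarrow> ('c \<Rightarrow> nat) \<Rightarrow> ('c \<Rightarrow> nat) pmf" where
  "choose_balls s x = map_pmf counts_of (pmf_of_set {S. S \<subseteq> balls x \<and> card S = s})"

definition remove_balls :: "nat \<Rightarrow> ('c \<Rightarrow> nat) \<Rightarrow> ('c \<Rightarrow> nat) pmf" where
  "remove_balls s x = map_pmf (\<lambda>m c. x c - m c) (choose_balls s x)"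

text \<open>One Polya draw: the chosen ball has color c with probability proportional to the
  total weight of color-c balls, alpha c (special ball) plus y c (ordinary balls);
  one new ordinary ball of that color is added.\<close>
definition polya_draw :: "('c::finite \<Rightarrow> real) \<Rightarrow> ('c \<Rightarrow> nat) \<Rightarrow> ('c \<Rightarrow> nat) pmf" where
  "polya_draw \<alpha> y = map_pmf (\<lambda>c. y(c := y c + 1))
     (embed_pmf (\<lambda>c. (\<alpha> c + real (y c)) / ((\<Sum>i\<in>UNIV. \<alpha> i) + real (\<Sum>i\<in>UNIV. y i))))"

fun polya_draws :: "('c::finite \<Rightarrow> real) \<Rightarrow> nat \<Rightarrow> ('c \<Rightarrow> nat) \<Rightarrow> ('c \<Rightarrow> nat) pmf" where
  "polya_draws \<alpha> 0 y = return_pmf y"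
| "polya_draws \<alpha> (Suc n) y = bind_pmf (polya_draws \<alpha> n y) (polya_draw \<alpha>)"

text \<open>One step of the Polya level model: mark s balls, do s draws (marked balls stay),
  then remove the marked balls.\<close>
definition level_step :: "('c::finite \<Rightarrow> real) \<Rightarrow> nat \<Rightarrow> ('c \<Rightarrow> nat) \<Rightarrow> ('c \<Rightarrow> nat) pmf" where
  "level_step \<alpha> s x = bind_pmf (choose_balls s x)
     (\<lambda>m. map_pmf (\<lambda>z c. z c - m c) (polya_draws \<alpha> s x))"

definition down_up_step :: "('c::finite \<Rightarrow> real) \<Rightarrow> nat \<Rightarrow> ('c \<Rightarrow> nat) \<Rightarrow> ('c \<Rightarrow> nat) pmf" where
  "down_up_step \<alpha> s x = bind_pmf (remove_balls s x) (polya_draws \<alpha> s)"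

definition up_down_step :: "('c::finite \<Rightarrow> real) \<Rightarrow> nat \<Rightarrow> ('c \<Rightarrow> nat) \<Rightarrow> ('c \<Rightarrow> nat) pmf" where
  "up_down_step \<alpha> s x = bind_pmf (polya_draws \<alpha> s x) (remove_balls s)"

definition reversible_chain_on :: "'a set \<Rightarrow> ('a \<Rightarrow> 'a pmf) \<Rightarrow> ('a \<Rightarrow> real) \<Rightarrow> bool" where
  "reversible_chain_on S K \<pi> \<longleftrightarrow>
     (\<forall>x\<in>S. set_pmf (K x) \<subseteq> S) \<and>
     (\<forall>x\<in>S. \<forall>y\<in>S. \<pi> x * pmf (K x) y = \<pi> y * pmf (K y) x)"

end

theory Submission
  imports Defs
begin

lemma pmf_bind_sum:
  assumes "finite A" "set_pmf p \<subseteq> A"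
  shows "pmf (bind_pmf p f) y = (\<Sum>x\<in>A. pmf p x * pmf (f x) y)"
  unfolding pmf_bind
  by (subst integral_measure_pmf_real[OF assms(1)]) (use assms(2) in \<open>auto simp: mult.commute\<close>)

lemma pmf_map_sum:
  assumes "finite A" "set_pmf p \<subseteq> A"
  shows "pmf (map_pmf f p) y = (\<Sum>x\<in>A. if f x = y then pmf p x else 0)"
proof -
  have "map_pmf f p = bind_pmf p (\<lambda>x. return_pmf (f x))" by (simp add: map_pmf_def)
  then show ?thesis using pmf_bind_sum[OF assms, of "\<lambda>x. return_pmf (f x)" y]
    by (auto intro!: sum.cong simp: indicator_def)
qed

definition Fb :: "nat \<Rightarrow> ('c::finite \<Rightarrow> nat) set" where
  "Fb B = {f. \<forall>c. f c \<le> B}"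

lemma finite_Fb: "finite (Fb B :: ('c::finite \<Rightarrow> nat) set)"
proof -
  have "Fb B = Pi\<^sub>E (UNIV::'c set) (\<lambda>_. {..B})"
    by (auto simp: Fb_def PiE_UNIV_domain)
  then show ?thesis by (simp add: finite_PiE)
qed

lemma le_sum_fun: "(x::'c::finite \<Rightarrow> nat) c \<le> sum x UNIV"
  by (rule member_le_sum) auto

definition HypF :: "nat \<Rightarrow> ('c::finite \<Rightarrow> nat) \<Rightarrow> ('c \<Rightarrow> nat) \<Rightarrow> real" where
  "HypF s x m = (if m \<le> x \<and> sum m UNIV = s then
     (\<Prod>c\<in>UNIV. real (x c choose m c)) / real (sum x UNIV choose s) else 0)"

lemma card_balls: "card (balls (x::'c::finite\<Rightarrow>nat)) = sum x UNIV"
proof -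
  have "balls x = Sigma UNIV (\<lambda>c. {..<x c})" by (auto simp: balls_def)
  then show ?thesis by simp
qed

lemma finite_balls: "finite (balls (x::'c::finite\<Rightarrow>nat))"
proof -
  have "balls x = Sigma UNIV (\<lambda>c. {..<x c})" by (auto simp: balls_def)
  then show ?thesis by simp
qed

lemma card_counts:
  assumes "S \<subseteq> balls (x::'c::finite\<Rightarrow>nat)"
  shows "card S = sum (counts_of S) UNIV"
proof -
  have "S = Sigma UNIV (\<lambda>c. {k. (c,k)\<in>S})" by auto
  moreover have "finite {k. (c,k)\<in>S}" for c
    by (rule finite_subset[of _ "{..<x c}"]) (use assms in \<open>auto simp: balls_def\<close>)
  ultimately show ?thesis unfolding counts_of_def by (metis card_SigmaI finite)
qed

lemma card_counts_eq:
  fixes x m :: "'c::finite \<Rightarrow> nat"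
  assumes "m \<le> x"
  shows "card {S. S \<subseteq> balls x \<and> counts_of S = m} = (\<Prod>c\<in>UNIV. x c choose m c)"
proof -
  let ?P = "Pi\<^sub>E (UNIV::'c set) (\<lambda>c. {T. T \<subseteq> {..<x c} \<and> card T = m c})"
  have eq: "{S. S \<subseteq> balls x \<and> counts_of S = m} = (\<lambda>G. Sigma UNIV G) ` ?P"
  proof (intro equalityI subsetI)
    fix S assume S: "S \<in> {S. S \<subseteq> balls x \<and> counts_of S = m}"
    then have "S = Sigma UNIV (\<lambda>c. {k. (c,k)\<in>S})" by auto
    moreover have "(\<lambda>c. {k. (c,k)\<in>S}) \<in> ?P"
      using S by (auto simp: balls_def counts_of_def PiE_UNIV_domain)
    ultimately show "S \<in> (\<lambda>G. Sigma UNIV G) ` ?P" by blast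
  next
    fix S assume "S \<in> (\<lambda>G. Sigma UNIV G) ` ?P"
    then obtain G where G: "G \<in> ?P" "S = Sigma UNIV G" by blast
    have "{k. (c, k) \<in> Sigma UNIV G} = G c" for c by auto
    then show "S \<in> {S. S \<subseteq> balls x \<and> counts_of S = m}"
      using G by (auto simp: balls_def counts_of_def PiE_UNIV_domain fun_eq_iff)
  qed
  have inj: "inj_on (\<lambda>G. Sigma UNIV G) ?P"
  proof (rule inj_onI)
    fix G H assume "Sigma UNIV G = Sigma UNIV H"
    then have "{k. (c, k) \<in> Sigma UNIV G} = {k. (c, k) \<in> Sigma UNIV H}" for c by simp
    then show "G = H" by (auto simp: fun_eq_iff)
  qed
  have "card {S. S \<subseteq> balls x \<and> counts_of S = m} = card ?P"
    unfolding eq by (rule card_image[OF inj])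
  also have "\<dots> = (\<Prod>c\<in>UNIV. card {T. T \<subseteq> {..<x c} \<and> card T = m c})"
    by (simp add: card_PiE)
  also have "\<dots> = (\<Prod>c\<in>UNIV. x c choose m c)"
    by (simp add: n_subsets)
  finally show ?thesis .
qed

lemma pmf_choose_balls:
  fixes x m :: "'c::finite \<Rightarrow> nat"
  assumes "s \<le> sum x UNIV"
  shows "pmf (choose_balls s x) m = HypF s x m"
proof -
  let ?A = "{S. S \<subseteq> balls x \<and> card S = s}"
  have fin: "finite ?A" using finite_balls[of x] by simp
  have ne: "?A \<noteq> {}"
  proof -
    obtain S where "S \<subseteq> balls x" "card S = s"
      using assms card_balls[of x] by (metis obtain_subset_with_card_n)
    then show ?thesis by blast
  qed
  have cA: "card ?A = sum x UNIV choose s"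
    using n_subsets[OF finite_balls[of x], of s] card_balls[of x] by simp
  have "pmf (choose_balls s x) m = card (?A \<inter> counts_of -` {m}) / card ?A"
    unfolding choose_balls_def pmf_map measure_pmf_of_set[OF ne fin] ..
  also have "?A \<inter> counts_of -` {m} = (if sum m UNIV = s then {S. S \<subseteq> balls x \<and> counts_of S = m} else {})"
    using card_counts by auto
  also have "real (card (if sum m UNIV = s then {S. S \<subseteq> balls x \<and> counts_of S = m} else {})) =
     (if m \<le> x \<and> sum m UNIV = s then (\<Prod>c\<in>UNIV. real (x c choose m c)) else 0)"
  proof (cases "m \<le> x")
    case True then show ?thesis by (simp add: card_counts_eq)
  next
    case False
    then obtain c where c: "\<not> m c \<le> x c" by (auto simp: le_fun_def)
    have e: "{S. S \<subseteq> balls x \<and> counts_of S = m} = {}"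
    proof (rule ccontr)
      assume "{S. S \<subseteq> balls x \<and> counts_of S = m} \<noteq> {}"
      then obtain S where S: "S \<subseteq> balls x" "counts_of S = m" by blast
      have "counts_of S c \<le> card {..<x c}" unfolding counts_of_def
        by (rule card_mono) (use S in \<open>auto simp: balls_def\<close>)
      with S c show False by simp
    qed
    show ?thesis using False by (simp add: e)
  qed
  finally show ?thesis unfolding HypF_def cA by auto
qed


lemma set_pmf_sub: "(\<And>x. pmf p x \<noteq> 0 \<Longrightarrow> x \<in> A) \<Longrightarrow> set_pmf p \<subseteq> A"
  by (auto simp: set_pmf_eq)

lemma HypF_nz: "HypF s x m \<noteq> 0 \<Longrightarrow> m \<le> x \<and> sum m UNIV = s"
  by (auto simp: HypF_def split: if_splits)

lemma le_Fb: "(m::'c::finite\<Rightarrow>nat) \<le> x \<Longrightarrow> m \<in> Fb (sum x UNIV)"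
  unfolding Fb_def le_fun_def using le_sum_fun order_trans by blast

lemma sum_le_Fb: "sum (m::'c::finite\<Rightarrow>nat) UNIV \<le> B \<Longrightarrow> m \<in> Fb B"
  unfolding Fb_def using le_sum_fun order_trans by blast

definition RemF :: "nat \<Rightarrow> ('c::finite \<Rightarrow> nat) \<Rightarrow> ('c \<Rightarrow> nat) \<Rightarrow> real" where
  "RemF s x r = (if r \<le> x \<and> sum r UNIV + s = sum x UNIV then
     (\<Prod>c\<in>UNIV. real (x c choose r c)) / real (sum x UNIV choose s) else 0)"

lemma pmf_remove_balls:
  fixes x r :: "'c::finite \<Rightarrow> nat"
  assumes "s \<le> sum x UNIV"
  shows "pmf (remove_balls s x) r = RemF s x r"
proof -
  have sup: "set_pmf (choose_balls s x) \<subseteq> Fb (sum x UNIV)"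
    by (rule set_pmf_sub) (metis HypF_nz le_Fb pmf_choose_balls[OF assms])
  have "pmf (remove_balls s x) r = (\<Sum>m\<in>Fb (sum x UNIV). if (\<lambda>c. x c - m c) = r then HypF s x m else 0)"
    unfolding remove_balls_def by (subst pmf_map_sum[OF finite_Fb sup], rule sum.cong[OF refl], simp only: pmf_choose_balls[OF assms])
  also have "\<dots> = (\<Sum>m\<in>Fb (sum x UNIV). if m = (\<lambda>c. x c - r c) then (if r \<le> x then HypF s x m else 0) else 0)"
  proof (rule sum.cong[OF refl])
    fix m :: "'c \<Rightarrow> nat" assume "m \<in> Fb (sum x UNIV)"
    show "(if (\<lambda>c. x c - m c) = r then HypF s x m else 0) =
      (if m = (\<lambda>c. x c - r c) then (if r \<le> x then HypF s x m else 0) else 0)"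
    proof (cases "HypF s x m = 0")
      case True then show ?thesis by (simp only: if_cancel)
    next
      case False
      then have mx: "m \<le> x" using HypF_nz by blast
      have "((\<lambda>c. x c - m c) = r) \<longleftrightarrow> (m = (\<lambda>c. x c - r c) \<and> r \<le> x)"
        using mx by (auto simp: fun_eq_iff le_fun_def) (metis diff_diff_cancel diff_le_self)+
      then show ?thesis by auto
    qed
  qed
  also have "\<dots> = (if r \<le> x then HypF s x (\<lambda>c. x c - r c) else 0)"
    by (subst sum.delta[OF finite_Fb]) (auto intro!: le_Fb simp: le_fun_def)
  also have "\<dots> = RemF s x r"
  proof (cases "r \<le> x")
    case True
    have "sum (\<lambda>c. x c - r c) UNIV = sum x UNIV - sum r UNIV"
      by (rule sum_subtractf_nat) (use True in \<open>auto simp: le_fun_def\<close>)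
    moreover have "sum r UNIV \<le> sum x UNIV" using True by (simp add: le_fun_def sum_mono)
    moreover have "(\<Prod>c\<in>UNIV. real (x c choose (x c - r c))) = (\<Prod>c\<in>UNIV. real (x c choose r c))"
      by (rule prod.cong[OF refl]) (metis True binomial_symmetric le_fun_def)
    ultimately show ?thesis using True unfolding HypF_def RemF_def
      by (auto simp: le_fun_def)
  qed (simp add: RemF_def)
  finally show ?thesis .
qed

lemma pmf_polya_draw:
  fixes \<alpha> :: "'c::finite \<Rightarrow> real"
  assumes a: "\<forall>i. \<alpha> i > 0"
  shows "pmf (polya_draw \<alpha> w) z = (\<Sum>c\<in>UNIV. if w(c := w c + 1) = z then
     (\<alpha> c + real (w c)) / (sum \<alpha> UNIV + real (sum w UNIV)) else 0)"
proof -
  let ?f = "\<lambda>c. (\<alpha> c + real (w c)) / ((\<Sum>i\<in>UNIV. \<alpha> i) + real (\<Sum>i\<in>UNIV. w i))"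
  have pos: "sum \<alpha> UNIV > 0" using a by (simp add: sum_pos)
  have pos2: "0 < sum \<alpha> UNIV + real (sum w UNIV)"
    by (metis add_pos_nonneg of_nat_0_le_iff pos)
  have nn: "0 \<le> ?f c" for c
  proof (rule divide_nonneg_pos)
    show "0 \<le> \<alpha> c + real (w c)" using a[rule_format, of c] by linarith
    show "0 < (\<Sum>i\<in>UNIV. \<alpha> i) + real (\<Sum>i\<in>UNIV. w i)" using pos2 by simp
  qed
  have s1: "sum ?f UNIV = 1"
    using pos2 by (simp add: sum_divide_distrib[symmetric] sum.distrib)
  have "(\<integral>\<^sup>+x. ennreal (?f x) \<partial>count_space UNIV) = 1"
    by (subst nn_integral_count_space_finite) (use nn s1 in auto)
  then have e: "pmf (embed_pmf ?f) c = ?f c" for c by (rule pmf_embed_pmf[OF nn])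
  show ?thesis unfolding polya_draw_def
    by (subst pmf_map_sum[of UNIV], simp, simp, rule sum.cong[OF refl], simp only: e)
qed

definition PolF :: "('c::finite \<Rightarrow> real) \<Rightarrow> nat \<Rightarrow> ('c \<Rightarrow> nat) \<Rightarrow> ('c \<Rightarrow> nat) \<Rightarrow> real" where
  "PolF \<alpha> n y z = (if y \<le> z \<and> sum z UNIV = sum y UNIV + n then
     fact n * (\<Prod>c\<in>UNIV. pochhammer (\<alpha> c + real (y c)) (z c - y c) / fact (z c - y c))
       / pochhammer (sum \<alpha> UNIV + real (sum y UNIV)) n else 0)"

lemma PolF_nz: "PolF \<alpha> n y z \<noteq> 0 \<Longrightarrow> y \<le> z \<and> sum z UNIV = sum y UNIV + n"
  by (auto simp: PolF_def split: if_splits)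

lemma sum_upd: "sum ((z::'c::finite\<Rightarrow>nat)(c := v)) UNIV + z c = sum z UNIV + v"
proof -
  have "sum (z(c := v)) UNIV = v + sum (z(c := v)) (UNIV - {c})" by (subst sum.remove[of _ c]) auto
  moreover have "sum z UNIV = z c + sum z (UNIV - {c})" by (subst sum.remove[of _ c]) auto
  moreover have "sum (z(c := v)) (UNIV - {c}) = sum z (UNIV - {c})" by (rule sum.cong) auto
  ultimately show ?thesis by simp
qed

lemma prod_upd:
  fixes z :: "'c::finite\<Rightarrow>nat" and f :: "'c \<Rightarrow> nat \<Rightarrow> real"
  shows "(\<Prod>i\<in>UNIV. f i ((z(c := v)) i)) * f c (z c) = (\<Prod>i\<in>UNIV. f i (z i)) * f c v"
proof -
  have "(\<Prod>i\<in>UNIV. f i ((z(c := v)) i)) = f c v * (\<Prod>i\<in>UNIV - {c}. f i ((z(c := v)) i))" by (subst prod.remove[of _ c]) auto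
  moreover have "(\<Prod>i\<in>UNIV. f i (z i)) = f c (z c) * (\<Prod>i\<in>UNIV - {c}. f i (z i))" by (subst prod.remove[of _ c]) auto
  moreover have "(\<Prod>i\<in>UNIV - {c}. f i ((z(c := v)) i)) = (\<Prod>i\<in>UNIV - {c}. f i (z i))" by (rule prod.cong) auto
  ultimately show ?thesis by simp
qed


lemma le_sum_eq: "(y::'c::finite\<Rightarrow>nat) \<le> z \<Longrightarrow> sum z UNIV = sum y UNIV \<Longrightarrow> z = y"
proof -
  assume yz: "y \<le> z" and s: "sum z UNIV = sum y UNIV"
  have "sum (\<lambda>c. z c - y c) UNIV = sum z UNIV - sum y UNIV"
    by (rule sum_subtractf_nat) (use yz in \<open>auto simp: le_fun_def\<close>)
  then have "\<forall>c. z c - y c = 0" using s by simp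
  then show "z = y" using yz by (auto simp: fun_eq_iff le_fun_def intro: antisym)
qed

lemma g_step:
  fixes a :: real and j :: nat
  assumes "a > 0"
  shows "pochhammer a j / fact j * (a + real j) = pochhammer a (Suc j) / fact (Suc j) * real (Suc j)"
proof -
  have f: "(fact (Suc j) :: real) = real (Suc j) * fact j" by simp
  have "pochhammer a (Suc j) = pochhammer a j * (a + real j)" by (simp add: pochhammer_Suc)
  then show ?thesis unfolding f by (simp del: of_nat_Suc)
qed

lemma polya_step:
  fixes \<alpha> :: "'c::finite \<Rightarrow> real"
  assumes a: "\<forall>i. \<alpha> i > 0"
  shows "(\<Sum>c\<in>UNIV. if 1 \<le> z c then PolF \<alpha> n y (z(c := z c - 1)) *
      ((\<alpha> c + real (z c - 1)) / (sum \<alpha> UNIV + real (sum (z(c := z c - 1)) UNIV))) else 0)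
     = PolF \<alpha> (Suc n) y z"
    (is "(\<Sum>c\<in>UNIV. ?T c) = _")
proof (cases "y \<le> z \<and> sum z UNIV = sum y UNIV + Suc n")
  case True
  then have yz: "y \<le> z" and sz: "sum z UNIV = sum y UNIV + Suc n" by auto
  define A where "A = sum \<alpha> UNIV"
  define sy where "sy = real (sum y UNIV)"
  define g where "g i k = pochhammer (\<alpha> i + real (y i)) (k - y i) / fact (k - y i)" for i k
  define G where "G = (\<Prod>i\<in>UNIV. g i (z i))"
  define D where "D = pochhammer (A + sy) n"
  have Apos: "A > 0" unfolding A_def using a by (simp add: sum_pos)
  have T: "?T c = real (z c - y c) * (fact n * G / (D * (A + sy + n)))" for c
  proof (cases "y c < z c")
    case False
    then have "z c = y c" using yz by (metis antisym le_fun_def not_le)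
    moreover have "\<not> y \<le> z(c := z c - 1)" if "1 \<le> z c"
      using that \<open>z c = y c\<close> by (auto simp: le_fun_def dest: spec[of _ c])
    ultimately show ?thesis
    proof (cases "1 \<le> z c")
      case True
      have "PolF \<alpha> n y (z(c := z c - 1)) = 0"
        using \<open>1 \<le> z c \<Longrightarrow> \<not> y \<le> z(c := z c - 1)\<close> True unfolding PolF_def by simp
      then show ?thesis using \<open>z c = y c\<close> True by simp
    qed simp
  next
    case True
    let ?z' = "z(c := z c - 1)"
    have yz': "y \<le> ?z'" using yz True by (auto simp: le_fun_def)
    have s': "sum ?z' UNIV = sum y UNIV + n" using sum_upd[of z c "z c - 1"] sz True by simp
    have P: "PolF \<alpha> n y ?z' = fact n * (\<Prod>i\<in>UNIV. g i (?z' i)) / D"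
      using yz' s' by (simp add: PolF_def g_def D_def A_def sy_def)
    have pu: "(\<Prod>i\<in>UNIV. g i (?z' i)) * g c (z c) = G * g c (z c - 1)"
      unfolding G_def by (rule prod_upd)
    have ac: "\<alpha> c + real (y c) > 0" using a by (simp add: add_pos_nonneg)
    have gnz: "g c (z c) \<noteq> 0" unfolding g_def using pochhammer_pos[OF ac, of "z c - y c"] by auto
    define j where "j = z c - y c - 1"
    have j: "z c - y c = Suc j" using True unfolding j_def by simp
    have zj: "z c - 1 - y c = j" using j by simp
    have key: "g c (z c - 1) * (\<alpha> c + real (z c - 1)) = g c (z c) * real (z c - y c)"
    proof -
      have "\<alpha> c + real (z c - 1) = (\<alpha> c + real (y c)) + real j" using j by simp
      then show ?thesis unfolding g_def zj j using g_step[OF ac, of j] by (simp only:)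
    qed
    have "(\<Prod>i\<in>UNIV. g i (?z' i)) * (\<alpha> c + real (z c - 1)) = G * real (z c - y c)"
    proof -
      have "(\<Prod>i\<in>UNIV. g i (?z' i)) * (\<alpha> c + real (z c - 1)) * g c (z c)
          = G * g c (z c - 1) * (\<alpha> c + real (z c - 1))" using pu by (simp add: algebra_simps)
      also have "\<dots> = G * real (z c - y c) * g c (z c)" using key by (simp add: algebra_simps)
      finally show ?thesis using gnz by simp
    qed
    moreover have "sum \<alpha> UNIV + real (sum ?z' UNIV) = A + sy + n"
      using s' by (simp add: A_def sy_def)
    ultimately show ?thesis
    proof -
      assume E1: "(\<Prod>i\<in>UNIV. g i (?z' i)) * (\<alpha> c + real (z c - 1)) = G * real (z c - y c)"
        and E2: "sum \<alpha> UNIV + real (sum ?z' UNIV) = A + sy + n"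
      have z1: "1 \<le> z c" using True by simp
      have "?T c = fact n * (\<Prod>i\<in>UNIV. g i (?z' i)) / D * ((\<alpha> c + real (z c - 1)) / (A + sy + n))"
        using z1 P E2 by simp
      also have "\<dots> = fact n * ((\<Prod>i\<in>UNIV. g i (?z' i)) * (\<alpha> c + real (z c - 1))) / (D * (A + sy + n))"
        by simp
      also have "\<dots> = fact n * (G * real (z c - y c)) / (D * (A + sy + n))" unfolding E1 ..
      also have "\<dots> = real (z c - y c) * (fact n * G / (D * (A + sy + n)))" by simp
      finally show ?thesis .
    qed
  qed
  have "(\<Sum>c\<in>UNIV. ?T c) = (\<Sum>c\<in>UNIV. real (z c - y c)) * (fact n * G / (D * (A + sy + n)))"
    by (simp only: T sum_distrib_right)
  also have "(\<Sum>c\<in>UNIV. real (z c - y c)) = real (Suc n)"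
  proof -
    have "sum (\<lambda>c. z c - y c) UNIV = sum z UNIV - sum y UNIV"
      by (rule sum_subtractf_nat) (use yz in \<open>auto simp: le_fun_def\<close>)
    moreover have "(\<Sum>c\<in>UNIV. real (z c - y c)) = real (\<Sum>c\<in>UNIV. z c - y c)" by (simp only: of_nat_sum)
    ultimately show ?thesis using sz by simp
  qed
  also have "real (Suc n) * (fact n * G / (D * (A + sy + n))) = PolF \<alpha> (Suc n) y z"
  proof -
    have "PolF \<alpha> (Suc n) y z = fact (Suc n) * G / pochhammer (A + sy) (Suc n)"
      using True by (simp add: PolF_def G_def g_def A_def sy_def)
    moreover have "pochhammer (A + sy) (Suc n) = D * (A + sy + n)" by (simp add: D_def pochhammer_Suc)
    moreover have "(fact (Suc n) :: real) = real (Suc n) * fact n" by (simp del: of_nat_Suc)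
    ultimately show ?thesis by simp
  qed
  finally show ?thesis .
next
  case False
  have "?T c = 0" for c
  proof (rule ccontr)
    assume ne: "?T c \<noteq> 0"
    then have z1: "1 \<le> z c" by (auto split: if_splits)
    then have "PolF \<alpha> n y (z(c := z c - 1)) \<noteq> 0" using ne by auto
    then have h: "y \<le> z(c := z c - 1)" "sum (z(c := z c - 1)) UNIV = sum y UNIV + n"
      using PolF_nz by blast+
    have "y \<le> z" unfolding le_fun_def
    proof
      fix i show "y i \<le> z i" using h(1) unfolding le_fun_def by (cases "i = c") (auto dest: spec[of _ i])
    qed
    moreover have "sum z UNIV = sum y UNIV + Suc n" using sum_upd[of z c "z c - 1"] h(2) z1 by simp
    ultimately show False using False by blast
  qed
  moreover have "PolF \<alpha> (Suc n) y z = 0" using False unfolding PolF_def by (simp only: if_False)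
  ultimately show ?thesis by simp
qed


lemma pmf_polya_draws:
  fixes \<alpha> :: "'c::finite \<Rightarrow> real"
  assumes a: "\<forall>i. \<alpha> i > 0"
  shows "pmf (polya_draws \<alpha> n y) z = PolF \<alpha> n y z"
proof (induction n arbitrary: z)
  case 0
  have "(y \<le> z \<and> sum z UNIV = sum y UNIV) \<longleftrightarrow> z = y" using le_sum_eq by auto
  then show ?case by (auto simp: PolF_def indicator_def)
next
  case (Suc n)
  define B where "B = sum y UNIV + n"
  have sup: "set_pmf (polya_draws \<alpha> n y) \<subseteq> Fb B"
    by (rule set_pmf_sub) (metis Suc.IH PolF_nz sum_le_Fb B_def order_refl)
  let ?p = "\<lambda>w c. (\<alpha> c + real (w c)) / (sum \<alpha> UNIV + real (sum w UNIV))"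
  have "pmf (polya_draws \<alpha> (Suc n) y) z = (\<Sum>w\<in>Fb B. PolF \<alpha> n y w * pmf (polya_draw \<alpha> w) z)"
    by (simp add: pmf_bind_sum[OF finite_Fb sup] Suc.IH)
  also have "\<dots> = (\<Sum>w\<in>Fb B. \<Sum>c\<in>UNIV. if w(c := w c + 1) = z then PolF \<alpha> n y w * ?p w c else 0)"
    by (simp only: pmf_polya_draw[OF a] sum_distrib_left) (rule sum.cong[OF refl], rule sum.cong[OF refl], simp)
  also have "\<dots> = (\<Sum>c\<in>UNIV. \<Sum>w\<in>Fb B. if w(c := w c + 1) = z then PolF \<alpha> n y w * ?p w c else 0)"
    by (rule sum.swap)
  also have "\<dots> = (\<Sum>c\<in>UNIV. if 1 \<le> z c then PolF \<alpha> n y (z(c := z c - 1)) * ?p (z(c := z c - 1)) c else 0)"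
  proof (rule sum.cong[OF refl])
    fix c
    have "(\<Sum>w\<in>Fb B. if w(c := w c + 1) = z then PolF \<alpha> n y w * ?p w c else 0)
      = (\<Sum>w\<in>Fb B. if w = z(c := z c - 1) then (if 1 \<le> z c then PolF \<alpha> n y w * ?p w c else 0) else 0)"
    proof (rule sum.cong[OF refl])
      fix w :: "'c \<Rightarrow> nat"
      have "(w(c := w c + 1) = z) \<longleftrightarrow> (w = z(c := z c - 1) \<and> 1 \<le> z c)"
        by (auto simp: fun_eq_iff split: if_splits) (metis diff_Suc_1, force, metis One_nat_def Suc_pred le_numeral_extra(2) less_eq_nat.simps(1) not_less_eq_eq)?
      then show "(if w(c := w c + 1) = z then PolF \<alpha> n y w * ?p w c else 0) =
        (if w = z(c := z c - 1) then (if 1 \<le> z c then PolF \<alpha> n y w * ?p w c else 0) else 0)" by auto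
    qed
    also have "\<dots> = (if 1 \<le> z c then PolF \<alpha> n y (z(c := z c - 1)) * ?p (z(c := z c - 1)) c else 0)"
    proof (cases "z(c := z c - 1) \<in> Fb B")
      case True then show ?thesis by (simp add: sum.delta[OF finite_Fb])
    next
      case False
      then have "PolF \<alpha> n y (z(c := z c - 1)) = 0"
        using PolF_nz sum_le_Fb B_def by (metis order_refl)
      then show ?thesis using False by (simp add: sum.delta[OF finite_Fb])
    qed
    finally show "(\<Sum>w\<in>Fb B. if w(c := w c + 1) = z then PolF \<alpha> n y w * ?p w c else 0) =
       (if 1 \<le> z c then PolF \<alpha> n y (z(c := z c - 1)) * ?p (z(c := z c - 1)) c else 0)" .
  qed
  also have "\<dots> = PolF \<alpha> (Suc n) y z"
    by (rule trans[OF sum.cong[OF refl] polya_step[OF a, of z n y]]) (simp only: fun_upd_same)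
  finally show ?case .
qed


lemma XN_iff: "x \<in> XN N \<longleftrightarrow> sum x UNIV = N"
  by (simp add: XN_def)

lemma RemF_nz: "RemF s x r \<noteq> 0 \<Longrightarrow> r \<le> x \<and> sum r UNIV + s = sum x UNIV"
  by (auto simp: RemF_def split: if_splits)

lemma Fb_mono: "B \<le> B' \<Longrightarrow> Fb B \<subseteq> Fb B'"
  by (auto simp: Fb_def intro: order_trans)

lemma le_Fb': "(m::'c::finite\<Rightarrow>nat) \<le> x \<Longrightarrow> sum x UNIV \<le> B \<Longrightarrow> m \<in> Fb B"
  using le_Fb Fb_mono by blast

lemma pmf_down_up:
  fixes \<alpha> :: "'c::finite \<Rightarrow> real"
  assumes a: "\<forall>i. \<alpha> i > 0" and x: "x \<in> XN N" and s: "s \<le> N"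
  shows "pmf (down_up_step \<alpha> s x) y = (\<Sum>r\<in>Fb (N+s). RemF s x r * PolF \<alpha> s r y)"
proof -
  have sx: "s \<le> sum x UNIV" using x s by (simp add: XN_iff)
  have sup: "set_pmf (remove_balls s x) \<subseteq> Fb (N+s)"
    by (rule set_pmf_sub) (metis RemF_nz le_Fb' pmf_remove_balls[OF sx] x XN_iff le_add1)
  show ?thesis unfolding down_up_step_def
    by (simp add: pmf_bind_sum[OF finite_Fb sup] pmf_remove_balls[OF sx] pmf_polya_draws[OF a])
qed

lemma pmf_up_down:
  fixes \<alpha> :: "'c::finite \<Rightarrow> real"
  assumes a: "\<forall>i. \<alpha> i > 0" and x: "x \<in> XN N"
  shows "pmf (up_down_step \<alpha> s x) y = (\<Sum>z\<in>Fb (N+s). PolF \<alpha> s x z * RemF s z y)"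
proof -
  have sup: "set_pmf (polya_draws \<alpha> s x) \<subseteq> Fb (N+s)"
    by (rule set_pmf_sub) (metis PolF_nz sum_le_Fb pmf_polya_draws[OF a] x XN_iff order_refl)
  have "pmf (up_down_step \<alpha> s x) y = (\<Sum>z\<in>Fb (N+s). PolF \<alpha> s x z * pmf (remove_balls s z) y)"
    unfolding up_down_step_def by (simp add: pmf_bind_sum[OF finite_Fb sup] pmf_polya_draws[OF a])
  also have "\<dots> = (\<Sum>z\<in>Fb (N+s). PolF \<alpha> s x z * RemF s z y)"
  proof (rule sum.cong[OF refl])
    fix z :: "'c \<Rightarrow> nat" assume "z \<in> Fb (N+s)"
    show "PolF \<alpha> s x z * pmf (remove_balls s z) y = PolF \<alpha> s x z * RemF s z y"
    proof (cases "PolF \<alpha> s x z = 0")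
      case False
      then have "s \<le> sum z UNIV" using PolF_nz by fastforce
      then show ?thesis by (simp add: pmf_remove_balls)
    qed simp
  qed
  finally show ?thesis .
qed

lemma pmf_level:
  fixes \<alpha> :: "'c::finite \<Rightarrow> real"
  assumes a: "\<forall>i. \<alpha> i > 0" and x: "x \<in> XN N" and s: "s \<le> N"
  shows "pmf (level_step \<alpha> s x) y = (\<Sum>z\<in>Fb (N+s). PolF \<alpha> s x z *
     (if y \<le> z then HypF s x (\<lambda>c. z c - y c) else 0))"
proof -
  have sx: "s \<le> sum x UNIV" using x s by (simp add: XN_iff)
  have sup1: "set_pmf (choose_balls s x) \<subseteq> Fb (N+s)"
    by (rule set_pmf_sub) (metis HypF_nz le_Fb' pmf_choose_balls[OF sx] x XN_iff le_add1)
  have sup2: "set_pmf (polya_draws \<alpha> s x) \<subseteq> Fb (N+s)"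
    by (rule set_pmf_sub) (metis PolF_nz sum_le_Fb pmf_polya_draws[OF a] x XN_iff order_refl)
  have "pmf (level_step \<alpha> s x) y = (\<Sum>m\<in>Fb (N+s). HypF s x m *
      (\<Sum>z\<in>Fb (N+s). if (\<lambda>c. z c - m c) = y then PolF \<alpha> s x z else 0))"
    unfolding level_step_def
    by (simp only: pmf_bind_sum[OF finite_Fb sup1] pmf_choose_balls[OF sx] pmf_map_sum[OF finite_Fb sup2]
        pmf_polya_draws[OF a])
  also have "\<dots> = (\<Sum>m\<in>Fb (N+s). \<Sum>z\<in>Fb (N+s). if (\<lambda>c. z c - m c) = y then HypF s x m * PolF \<alpha> s x z else 0)"
    by (simp add: sum_distrib_left if_distrib cong: if_cong)
  also have "\<dots> = (\<Sum>z\<in>Fb (N+s). \<Sum>m\<in>Fb (N+s). if (\<lambda>c. z c - m c) = y then HypF s x m * PolF \<alpha> s x z else 0)"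
    by (rule sum.swap)
  also have "\<dots> = (\<Sum>z\<in>Fb (N+s). PolF \<alpha> s x z * (if y \<le> z then HypF s x (\<lambda>c. z c - y c) else 0))"
  proof (rule sum.cong[OF refl])
    fix z :: "'c \<Rightarrow> nat" assume zF: "z \<in> Fb (N+s)"
    show "(\<Sum>m\<in>Fb (N+s). if (\<lambda>c. z c - m c) = y then HypF s x m * PolF \<alpha> s x z else 0) =
      PolF \<alpha> s x z * (if y \<le> z then HypF s x (\<lambda>c. z c - y c) else 0)"
    proof (cases "PolF \<alpha> s x z = 0")
      case True then show ?thesis by (simp only: mult_zero_right if_cancel sum.neutral_const mult_zero_left)
    next
      case False
      then have xz: "x \<le> z" using PolF_nz by blast
      have "(\<Sum>m\<in>Fb (N+s). if (\<lambda>c. z c - m c) = y then HypF s x m * PolF \<alpha> s x z else 0) =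
        (\<Sum>m\<in>Fb (N+s). if m = (\<lambda>c. z c - y c) then (if y \<le> z then HypF s x m * PolF \<alpha> s x z else 0) else 0)"
      proof (rule sum.cong[OF refl])
        fix m :: "'c \<Rightarrow> nat"
        show "(if (\<lambda>c. z c - m c) = y then HypF s x m * PolF \<alpha> s x z else 0) =
          (if m = (\<lambda>c. z c - y c) then (if y \<le> z then HypF s x m * PolF \<alpha> s x z else 0) else 0)"
        proof (cases "HypF s x m = 0")
          case True then show ?thesis by (simp only: if_cancel mult_zero_left)
        next
          case False
          then have "m \<le> x" using HypF_nz by blast
          then have mz: "\<forall>c. m c \<le> z c" using xz by (auto simp: le_fun_def intro: order_trans)
          have "((\<lambda>c. z c - m c) = y) \<longleftrightarrow> (m = (\<lambda>c. z c - y c) \<and> y \<le> z)"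
          proof
            assume "(\<lambda>c. z c - m c) = y"
            then have "\<forall>c. z c - m c = y c" by (auto simp: fun_eq_iff)
            then have "m c = z c - y c \<and> y c \<le> z c" for c using mz[rule_format, of c] by (metis diff_le_self diff_diff_cancel)
            then show "m = (\<lambda>c. z c - y c) \<and> y \<le> z" by (auto simp: fun_eq_iff le_fun_def)
          next
            assume "m = (\<lambda>c. z c - y c) \<and> y \<le> z"
            then show "(\<lambda>c. z c - m c) = y" by (auto simp: fun_eq_iff le_fun_def)
          qed
          then show ?thesis by auto
        qed
      qed
      also have "\<dots> = (if y \<le> z then HypF s x (\<lambda>c. z c - y c) * PolF \<alpha> s x z else 0)"
      proof -
        have "(\<lambda>c. z c - y c) \<in> Fb (N+s)" using zF unfolding Fb_def by (auto intro: le_trans[OF diff_le_self])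
        then show ?thesis by (subst sum.delta[OF finite_Fb]) auto
      qed
      finally show ?thesis by simp
    qed
  qed
  finally show ?thesis .
qed


lemma poch_split: "r \<le> x \<Longrightarrow> pochhammer (a::real) x = pochhammer a r * pochhammer (a + of_nat r) (x - r)"
  using pochhammer_product'[of a r "x - r"] by simp

lemma Q_eq: "x \<le> z \<Longrightarrow> pochhammer (a::real) x / fact x * (pochhammer (a + real x) (z - x) / fact (z - x))
   = pochhammer a z / (fact x * fact (z - x))"
  using poch_split[of x z a] by simp

lemma DM_alt: "x \<in> XN N \<Longrightarrow> DM N \<alpha> x = fact N / pochhammer (sum \<alpha> UNIV) N * (\<Prod>i\<in>UNIV. pochhammer (\<alpha> i) (x i) / fact (x i))"
  by (simp add: DM_def prod_dividef mult_ac)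

definition Udu :: "real \<Rightarrow> nat \<Rightarrow> nat \<Rightarrow> nat \<Rightarrow> real" where
  "Udu a x r y = pochhammer a x / fact x * real (x choose r) * (pochhammer (a + real r) (y - r) / fact (y - r))"

lemma Udu_sym: "r \<le> x \<Longrightarrow> r \<le> y \<Longrightarrow> Udu a x r y = Udu a y r x"
proof -
  assume rx: "r \<le> x" and ry: "r \<le> y"
  have "Udu a x r y = pochhammer a r / fact r * (pochhammer (a + real r) (x - r) / fact (x - r))
     * (pochhammer (a + real r) (y - r) / fact (y - r))" if "r \<le> x" for x y
    unfolding Udu_def using poch_split[OF that, of a] binomial_fact[OF that, where 'a=real]
    by (simp add: divide_inverse mult_ac)
  then show ?thesis using rx ry by (simp add: mult_ac)
qed

lemma du_expr:
  fixes \<alpha> :: "'c::finite \<Rightarrow> real"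
  assumes x: "x \<in> XN N" and y: "y \<in> XN N"
  shows "DM N \<alpha> x * (RemF s x r * PolF \<alpha> s r y) = (if r \<le> x \<and> r \<le> y \<and> sum r UNIV + s = N then
     fact N / pochhammer (sum \<alpha> UNIV) N / real (N choose s) * (fact s / pochhammer (sum \<alpha> UNIV + real (sum r UNIV)) s)
      * (\<Prod>i\<in>UNIV. Udu (\<alpha> i) (x i) (r i) (y i)) else 0)"
proof (cases "r \<le> x \<and> r \<le> y \<and> sum r UNIV + s = N")
  case True
  then have "sum y UNIV = sum r UNIV + s" using y by (simp add: XN_iff)
  then show ?thesis using True x
    by (simp add: DM_alt RemF_def PolF_def XN_iff Udu_def prod.distrib divide_inverse mult_ac)
next
  case False
  have h: "RemF s x r * PolF \<alpha> s r y = 0"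
    using RemF_nz[of s x r] PolF_nz[of \<alpha> s r y] False x y by (auto simp: XN_iff)
  show ?thesis by (simp only: False h if_False mult_zero_right)
qed


definition Uud :: "real \<Rightarrow> nat \<Rightarrow> nat \<Rightarrow> nat \<Rightarrow> real" where
  "Uud a x z y = pochhammer a x / fact x * (pochhammer (a + real x) (z - x) / fact (z - x)) * real (z choose y)"

lemma Uud_sym: "x \<le> z \<Longrightarrow> y \<le> z \<Longrightarrow> Uud a x z y = Uud a y z x"
proof -
  assume xz: "x \<le> z" and yz: "y \<le> z"
  have "Uud a x z y = pochhammer a z * fact z / (fact x * fact (z - x) * fact y * fact (z - y))"
    if "x \<le> z" "y \<le> z" for x y
    unfolding Uud_def using Q_eq[OF that(1), of a] binomial_fact[OF that(2), where 'a=real]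
    by (simp add: divide_inverse mult_ac)
  then show ?thesis using xz yz by (simp add: mult_ac)
qed

lemma ud_expr:
  fixes \<alpha> :: "'c::finite \<Rightarrow> real"
  assumes x: "x \<in> XN N" and y: "y \<in> XN N"
  shows "DM N \<alpha> x * (PolF \<alpha> s x z * RemF s z y) = (if x \<le> z \<and> y \<le> z \<and> sum z UNIV = N + s then
     fact N / pochhammer (sum \<alpha> UNIV) N * (fact s / pochhammer (sum \<alpha> UNIV + real N) s) / real ((N + s) choose s)
      * (\<Prod>i\<in>UNIV. Uud (\<alpha> i) (x i) (z i) (y i)) else 0)"
proof (cases "x \<le> z \<and> y \<le> z \<and> sum z UNIV = N + s")
  case True
  then show ?thesis using True x y
    by (simp add: DM_alt RemF_def PolF_def XN_iff Uud_def prod.distrib divide_inverse mult_ac)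
next
  case False
  have h: "PolF \<alpha> s x z * RemF s z y = 0"
    using RemF_nz[of s z y] PolF_nz[of \<alpha> s x z] False x y by (auto simp: XN_iff)
  show ?thesis by (simp only: False h if_False mult_zero_right)
qed

definition Ulv :: "real \<Rightarrow> nat \<Rightarrow> nat \<Rightarrow> nat \<Rightarrow> real" where
  "Ulv a x z y = pochhammer a x / fact x * (pochhammer (a + real x) (z - x) / fact (z - x)) * real (x choose (z - y))"

lemma Ulv_sym: "x \<le> z \<Longrightarrow> y \<le> z \<Longrightarrow> z \<le> x + y \<Longrightarrow> Ulv a x z y = Ulv a y z x"
proof -
  assume xz: "x \<le> z" and yz: "y \<le> z" and zxy: "z \<le> x + y"
  have "Ulv a x z y = pochhammer a z / (fact (z - x) * fact (z - y) * fact (x + y - z))"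
    if "x \<le> z" "y \<le> z" "z \<le> x + y" for x y
  proof -
    have "z - y \<le> x" using that by simp
    moreover have "x - (z - y) = x + y - z" using that by simp
    ultimately show ?thesis
      unfolding Ulv_def using Q_eq[OF that(1), of a] binomial_fact[OF \<open>z - y \<le> x\<close>, where 'a=real]
      by (simp add: field_simps)
  qed
  from this[OF xz yz zxy] this[OF yz xz] zxy show ?thesis by (simp add: mult_ac add.commute)
qed

lemma lv_expr:
  fixes \<alpha> :: "'c::finite \<Rightarrow> real"
  assumes x: "x \<in> XN N" and y: "y \<in> XN N"
  shows "DM N \<alpha> x * (PolF \<alpha> s x z * (if y \<le> z then HypF s x (\<lambda>c. z c - y c) else 0)) =
    (if x \<le> z \<and> y \<le> z \<and> (\<forall>c. z c \<le> x c + y c) \<and> sum z UNIV = N + s then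
     fact N / pochhammer (sum \<alpha> UNIV) N * (fact s / pochhammer (sum \<alpha> UNIV + real N) s) / real (N choose s)
      * (\<Prod>i\<in>UNIV. Ulv (\<alpha> i) (x i) (z i) (y i)) else 0)"
proof (cases "x \<le> z \<and> y \<le> z \<and> (\<forall>c. z c \<le> x c + y c) \<and> sum z UNIV = N + s")
  case True
  have le: "(\<lambda>c. z c - y c) \<le> x" using True by (auto simp: le_fun_def le_diff_conv)
  have "sum (\<lambda>c. z c - y c) UNIV = sum z UNIV - sum y UNIV"
    by (rule sum_subtractf_nat) (use True in \<open>auto simp: le_fun_def\<close>)
  then have sd: "sum (\<lambda>c. z c - y c) UNIV = s" using True y by (simp add: XN_iff)
  show ?thesis using True x y le sd
    by (simp add: DM_alt HypF_def PolF_def XN_iff Ulv_def prod.distrib divide_inverse mult_ac)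
next
  case False
  have h: "PolF \<alpha> s x z * (if y \<le> z then HypF s x (\<lambda>c. z c - y c) else 0) = 0"
  proof (rule ccontr)
    assume "PolF \<alpha> s x z * (if y \<le> z then HypF s x (\<lambda>c. z c - y c) else 0) \<noteq> 0"
    then have p: "PolF \<alpha> s x z \<noteq> 0" and yz: "y \<le> z" and hy: "HypF s x (\<lambda>c. z c - y c) \<noteq> 0"
      by (auto split: if_splits)
    from PolF_nz[OF p] HypF_nz[OF hy] x have "x \<le> z \<and> sum z UNIV = N + s" "(\<lambda>c. z c - y c) \<le> x"
      by (auto simp: XN_iff)
    then have "x \<le> z \<and> y \<le> z \<and> (\<forall>c. z c \<le> x c + y c) \<and> sum z UNIV = N + s"
      using yz by (auto simp: le_fun_def) (metis le_diff_conv)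
    then show False using False by blast
  qed
  show ?thesis by (simp only: False h if_False mult_zero_right)
qed


lemma sum_nz: "sum f A \<noteq> (0::real) \<Longrightarrow> \<exists>a\<in>A. f a \<noteq> 0"
  by (meson sum.neutral)

lemma supp_du:
  fixes \<alpha> :: "'c::finite \<Rightarrow> real"
  assumes a: "\<forall>i. \<alpha> i > 0" and s: "s \<le> N" and x: "x \<in> XN N"
  shows "set_pmf (down_up_step \<alpha> s x) \<subseteq> XN N"
proof
  fix y assume "y \<in> set_pmf (down_up_step \<alpha> s x)"
  then have "pmf (down_up_step \<alpha> s x) y \<noteq> 0" by (simp add: set_pmf_eq)
  then obtain r where "RemF s x r * PolF \<alpha> s r y \<noteq> 0"
    unfolding pmf_down_up[OF a x s] using sum_nz by blast
  then have "RemF s x r \<noteq> 0" "PolF \<alpha> s r y \<noteq> 0" by auto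
  from RemF_nz[OF this(1)] PolF_nz[OF this(2)] x show "y \<in> XN N" by (simp add: XN_iff)
qed

lemma supp_ud:
  fixes \<alpha> :: "'c::finite \<Rightarrow> real"
  assumes a: "\<forall>i. \<alpha> i > 0" and x: "x \<in> XN N"
  shows "set_pmf (up_down_step \<alpha> s x) \<subseteq> XN N"
proof
  fix y assume "y \<in> set_pmf (up_down_step \<alpha> s x)"
  then have "pmf (up_down_step \<alpha> s x) y \<noteq> 0" by (simp add: set_pmf_eq)
  then obtain z where "PolF \<alpha> s x z * RemF s z y \<noteq> 0"
    unfolding pmf_up_down[OF a x] using sum_nz by blast
  then have "PolF \<alpha> s x z \<noteq> 0" "RemF s z y \<noteq> 0" by auto
  from PolF_nz[OF this(1)] RemF_nz[OF this(2)] x show "y \<in> XN N" by (simp add: XN_iff)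
qed

lemma supp_lv:
  fixes \<alpha> :: "'c::finite \<Rightarrow> real"
  assumes a: "\<forall>i. \<alpha> i > 0" and s: "s \<le> N" and x: "x \<in> XN N"
  shows "set_pmf (level_step \<alpha> s x) \<subseteq> XN N"
proof
  fix y assume "y \<in> set_pmf (level_step \<alpha> s x)"
  then have "pmf (level_step \<alpha> s x) y \<noteq> 0" by (simp add: set_pmf_eq)
  then obtain z where nz: "PolF \<alpha> s x z * (if y \<le> z then HypF s x (\<lambda>c. z c - y c) else 0) \<noteq> 0"
    unfolding pmf_level[OF a x s] using sum_nz by blast
  then have p: "PolF \<alpha> s x z \<noteq> 0" and yz: "y \<le> z" and h: "HypF s x (\<lambda>c. z c - y c) \<noteq> 0"
    by (auto split: if_splits)
  have "sum (\<lambda>c. z c - y c) UNIV = sum z UNIV - sum y UNIV"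
    by (rule sum_subtractf_nat) (use yz in \<open>auto simp: le_fun_def\<close>)
  moreover have "sum y UNIV \<le> sum z UNIV" using yz by (simp add: le_fun_def sum_mono)
  ultimately show "y \<in> XN N" using PolF_nz[OF p] HypF_nz[OF h] x by (simp add: XN_iff)
qed

lemma prod_sym:
  "(\<And>i. f i = g i) \<Longrightarrow> (\<Prod>i\<in>UNIV. f i) = (\<Prod>i\<in>UNIV. (g i :: real))"
  by simp

theorem lemma4p4:
  fixes \<alpha> :: "'c::finite \<Rightarrow> real" and N s :: nat
  assumes "CARD('c) \<ge> 2" and "N \<ge> 1" and "\<forall>i. \<alpha> i > 0" and "s \<le> N"
  shows "reversible_chain_on (XN N) (level_step \<alpha> s) (DM N \<alpha>)
       \<and> reversible_chain_on (XN N) (down_up_step \<alpha> s) (DM N \<alpha>)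
       \<and> reversible_chain_on (XN N) (up_down_step \<alpha> s) (DM N \<alpha>)"
proof -
  note a = assms(3) and s = assms(4)
  have lv: "DM N \<alpha> x * pmf (level_step \<alpha> s x) y = DM N \<alpha> y * pmf (level_step \<alpha> s y) x"
    if x: "x \<in> XN N" and y: "y \<in> XN N" for x y
  proof -
    let ?K = "fact N / pochhammer (sum \<alpha> UNIV) N * (fact s / pochhammer (sum \<alpha> UNIV + real N) s) / real (N choose s)"
    have "DM N \<alpha> x * pmf (level_step \<alpha> s x) y = (\<Sum>z\<in>Fb (N+s). DM N \<alpha> x * (PolF \<alpha> s x z * (if y \<le> z then HypF s x (\<lambda>c. z c - y c) else 0)))"
      by (simp only: pmf_level[OF a x s] sum_distrib_left)
    also have "\<dots> = (\<Sum>z\<in>Fb (N+s). DM N \<alpha> y * (PolF \<alpha> s y z * (if x \<le> z then HypF s y (\<lambda>c. z c - x c) else 0)))"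
    proof (rule sum.cong[OF refl])
      fix z :: "'c \<Rightarrow> nat"
      let ?C1 = "x \<le> z \<and> y \<le> z \<and> (\<forall>c. z c \<le> x c + y c) \<and> sum z UNIV = N + s"
      let ?C2 = "y \<le> z \<and> x \<le> z \<and> (\<forall>c. z c \<le> y c + x c) \<and> sum z UNIV = N + s"
      have cc: "?C1 = ?C2" by (auto simp: add.commute)
      have eq: "(if ?C1 then ?K * (\<Prod>i\<in>UNIV. Ulv (\<alpha> i) (x i) (z i) (y i)) else 0)
         = (if ?C2 then ?K * (\<Prod>i\<in>UNIV. Ulv (\<alpha> i) (y i) (z i) (x i)) else 0)"
      proof (cases ?C1)
        case True
        have "(\<Prod>i\<in>UNIV. Ulv (\<alpha> i) (x i) (z i) (y i)) = (\<Prod>i\<in>UNIV. Ulv (\<alpha> i) (y i) (z i) (x i))"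
          by (rule prod_sym, rule Ulv_sym) (use True in \<open>auto simp: le_fun_def\<close>)
        then show ?thesis unfolding cc by simp
      qed (simp only: cc if_False)
      show "DM N \<alpha> x * (PolF \<alpha> s x z * (if y \<le> z then HypF s x (\<lambda>c. z c - y c) else 0)) =
        DM N \<alpha> y * (PolF \<alpha> s y z * (if x \<le> z then HypF s y (\<lambda>c. z c - x c) else 0))"
        by (subst lv_expr[OF x y], subst lv_expr[OF y x], rule eq)
    qed
    also have "\<dots> = DM N \<alpha> y * pmf (level_step \<alpha> s y) x"
      by (simp only: pmf_level[OF a y s] sum_distrib_left)
    finally show ?thesis .
  qed
  have du: "DM N \<alpha> x * pmf (down_up_step \<alpha> s x) y = DM N \<alpha> y * pmf (down_up_step \<alpha> s y) x"
    if x: "x \<in> XN N" and y: "y \<in> XN N" for x y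
  proof -
    have "DM N \<alpha> x * pmf (down_up_step \<alpha> s x) y = (\<Sum>r\<in>Fb (N+s). DM N \<alpha> x * (RemF s x r * PolF \<alpha> s r y))"
      by (simp only: pmf_down_up[OF a x s] sum_distrib_left)
    also have "\<dots> = (\<Sum>r\<in>Fb (N+s). DM N \<alpha> y * (RemF s y r * PolF \<alpha> s r x))"
    proof (rule sum.cong[OF refl])
      fix r :: "'c \<Rightarrow> nat"
      let ?K = "fact N / pochhammer (sum \<alpha> UNIV) N / real (N choose s) * (fact s / pochhammer (sum \<alpha> UNIV + real (sum r UNIV)) s)"
      let ?C1 = "r \<le> x \<and> r \<le> y \<and> sum r UNIV + s = N"
      let ?C2 = "r \<le> y \<and> r \<le> x \<and> sum r UNIV + s = N"
      have cc: "?C1 = ?C2" by auto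
      have eq: "(if ?C1 then ?K * (\<Prod>i\<in>UNIV. Udu (\<alpha> i) (x i) (r i) (y i)) else 0)
         = (if ?C2 then ?K * (\<Prod>i\<in>UNIV. Udu (\<alpha> i) (y i) (r i) (x i)) else 0)"
      proof (cases ?C1)
        case True
        have "(\<Prod>i\<in>UNIV. Udu (\<alpha> i) (x i) (r i) (y i)) = (\<Prod>i\<in>UNIV. Udu (\<alpha> i) (y i) (r i) (x i))"
          by (rule prod_sym, rule Udu_sym) (use True in \<open>auto simp: le_fun_def\<close>)
        then show ?thesis unfolding cc by simp
      qed (simp only: cc if_False)
      show "DM N \<alpha> x * (RemF s x r * PolF \<alpha> s r y) = DM N \<alpha> y * (RemF s y r * PolF \<alpha> s r x)"
        by (subst du_expr[OF x y], subst du_expr[OF y x], rule eq)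
    qed
    also have "\<dots> = DM N \<alpha> y * pmf (down_up_step \<alpha> s y) x"
      by (simp only: pmf_down_up[OF a y s] sum_distrib_left)
    finally show ?thesis .
  qed
  have ud: "DM N \<alpha> x * pmf (up_down_step \<alpha> s x) y = DM N \<alpha> y * pmf (up_down_step \<alpha> s y) x"
    if x: "x \<in> XN N" and y: "y \<in> XN N" for x y
  proof -
    let ?K = "fact N / pochhammer (sum \<alpha> UNIV) N * (fact s / pochhammer (sum \<alpha> UNIV + real N) s) / real ((N + s) choose s)"
    have "DM N \<alpha> x * pmf (up_down_step \<alpha> s x) y = (\<Sum>z\<in>Fb (N+s). DM N \<alpha> x * (PolF \<alpha> s x z * RemF s z y))"
      by (simp only: pmf_up_down[OF a x] sum_distrib_left)
    also have "\<dots> = (\<Sum>z\<in>Fb (N+s). DM N \<alpha> y * (PolF \<alpha> s y z * RemF s z x))"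
    proof (rule sum.cong[OF refl])
      fix z :: "'c \<Rightarrow> nat"
      let ?C1 = "x \<le> z \<and> y \<le> z \<and> sum z UNIV = N + s"
      let ?C2 = "y \<le> z \<and> x \<le> z \<and> sum z UNIV = N + s"
      have cc: "?C1 = ?C2" by auto
      have eq: "(if ?C1 then ?K * (\<Prod>i\<in>UNIV. Uud (\<alpha> i) (x i) (z i) (y i)) else 0)
         = (if ?C2 then ?K * (\<Prod>i\<in>UNIV. Uud (\<alpha> i) (y i) (z i) (x i)) else 0)"
      proof (cases ?C1)
        case True
        have "(\<Prod>i\<in>UNIV. Uud (\<alpha> i) (x i) (z i) (y i)) = (\<Prod>i\<in>UNIV. Uud (\<alpha> i) (y i) (z i) (x i))"
          by (rule prod_sym, rule Uud_sym) (use True in \<open>auto simp: le_fun_def\<close>)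
        then show ?thesis unfolding cc by simp
      qed (simp only: cc if_False)
      show "DM N \<alpha> x * (PolF \<alpha> s x z * RemF s z y) = DM N \<alpha> y * (PolF \<alpha> s y z * RemF s z x)"
        by (subst ud_expr[OF x y], subst ud_expr[OF y x], rule eq)
    qed
    also have "\<dots> = DM N \<alpha> y * pmf (up_down_step \<alpha> s y) x"
      by (simp only: pmf_up_down[OF a y] sum_distrib_left)
    finally show ?thesis .
  qed
  show ?thesis unfolding reversible_chain_on_def
    using lv du ud supp_lv[OF a s] supp_du[OF a s] supp_ud[OF a] by blast
qed

end
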